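(* Let $H$ be a uniquely vector colorable graph whose unique optimal vector coloring $i\mapsto p_i$ is injective. Then any connected graph $G$ with $H\subseteq G\subseteq H'(p)$ (all on vertex set $V(H)$) is a core.
   Context: A vector $t$-coloring of a graph ($t\ge2$) assigns unit vectors $p_i\in\mathbb{R}^d$ to vertices with $\langle p_i,p_j\rangle\le-1/(t-1)$ for all edges $ij$; $\chi_v$ is the least such $t$, and optimal means $t=\chi_v$. A graph is uniquely vector colorable if any two of its optimal vector colorings have the same Gram matrix. $H'(p)$ is the graph on $V(H)$ in which distinct $u,v$ are adjacent iff $\langle p_u,p_v\rangle\le-1/(\chi_v(H)-1)$. A graph $G$ is a core if every homomorphism (adjacency-preserving map) $G\to G$ is an automorphism. *)

theory Defs
  imports Complex_Main
begin

definition is_graph :: "('a \<Rightarrow> 'a \<Rightarrow> bool) \<Rightarrow> bool" where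
  "is_graph E \<longleftrightarrow> (\<forall>u v. E u v \<longrightarrow> E v u) \<and> (\<forall>u. \<not> E u u)"

definition connected_graph :: "('a \<Rightarrow> 'a \<Rightarrow> bool) \<Rightarrow> bool" where
  "connected_graph E \<longleftrightarrow> (\<forall>u v. E\<^sup>*\<^sup>* u v)"

definition graph_hom :: "('a \<Rightarrow> 'a \<Rightarrow> bool) \<Rightarrow> ('b \<Rightarrow> 'b \<Rightarrow> bool) \<Rightarrow> ('a \<Rightarrow> 'b) \<Rightarrow> bool" where
  "graph_hom G H f \<longleftrightarrow> (\<forall>u v. G u v \<longrightarrow> H (f u) (f v))"

definition graph_aut :: "('a \<Rightarrow> 'a \<Rightarrow> bool) \<Rightarrow> ('a \<Rightarrow> 'a) \<Rightarrow> bool" where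
  "graph_aut G f \<longleftrightarrow> bij f \<and> (\<forall>u v. G u v \<longleftrightarrow> G (f u) (f v))"

definition is_core :: "('a \<Rightarrow> 'a \<Rightarrow> bool) \<Rightarrow> bool" where
  "is_core G \<longleftrightarrow> (\<forall>f. graph_hom G G f \<longrightarrow> graph_aut G f)"

text \<open>Vectors of R^d are represented as functions nat => real vanishing at indices >= d.\<close>
definition ip :: "nat \<Rightarrow> (nat \<Rightarrow> real) \<Rightarrow> (nat \<Rightarrow> real) \<Rightarrow> real" where
  "ip d x y = (\<Sum>i<d. x i * y i)"

definition vec_coloring ::
  "('a \<Rightarrow> 'a \<Rightarrow> bool) \<Rightarrow> real \<Rightarrow> nat \<Rightarrow> ('a \<Rightarrow> nat \<Rightarrow> real) \<Rightarrow> bool" where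
  "vec_coloring E t d p \<longleftrightarrow> t \<ge> 2 \<and>
     (\<forall>v i. d \<le> i \<longrightarrow> p v i = 0) \<and>
     (\<forall>v. ip d (p v) (p v) = 1) \<and>
     (\<forall>u v. E u v \<longrightarrow> ip d (p u) (p v) \<le> - 1 / (t - 1))"

definition vec_chrom :: "('a \<Rightarrow> 'a \<Rightarrow> bool) \<Rightarrow> real" where
  "vec_chrom E = Inf {t. \<exists>d p. vec_coloring E t d p}"

definition optimal_vec_coloring :: "('a \<Rightarrow> 'a \<Rightarrow> bool) \<Rightarrow> nat \<Rightarrow> ('a \<Rightarrow> nat \<Rightarrow> real) \<Rightarrow> bool" where
  "optimal_vec_coloring E d p \<longleftrightarrow> vec_coloring E (vec_chrom E) d p"

definition uniquely_vector_colorable :: "('a \<Rightarrow> 'a \<Rightarrow> bool) \<Rightarrow> bool" where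
  "uniquely_vector_colorable E \<longleftrightarrow>
     (\<forall>d p d' q. optimal_vec_coloring E d p \<longrightarrow> optimal_vec_coloring E d' q \<longrightarrow>
        (\<forall>u v. ip d (p u) (p v) = ip d' (q u) (q v)))"

definition H_prime :: "('a \<Rightarrow> 'a \<Rightarrow> bool) \<Rightarrow> nat \<Rightarrow> ('a \<Rightarrow> nat \<Rightarrow> real) \<Rightarrow> 'a \<Rightarrow> 'a \<Rightarrow> bool" where
  "H_prime H d p u v \<longleftrightarrow> u \<noteq> v \<and> ip d (p u) (p v) \<le> - 1 / (vec_chrom H - 1)"

end

theory Submission
  imports Defs
begin

lemma unit_eq:
  assumes "ip d x x = 1" "ip d y y = 1" "ip d x y = 1"
    and "\<forall>i. d \<le> i \<longrightarrow> x i = 0" "\<forall>i. d \<le> i \<longrightarrow> y i = 0"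
  shows "x = y"
proof
  fix i
  have "(\<Sum>i<d. (x i - y i)^2) = ip d x x - 2 * ip d x y + ip d y y"
  proof -
    have "(\<Sum>i<d. (x i - y i)^2) = (\<Sum>i<d. x i * x i - 2 * (x i * y i) + y i * y i)"
      by (rule sum.cong) (auto simp: power2_eq_square algebra_simps)
    also have "\<dots> = (\<Sum>i<d. x i * x i) - 2 * (\<Sum>i<d. x i * y i) + (\<Sum>i<d. y i * y i)"
      by (simp add: sum.distrib sum_subtractf sum_distrib_left)
    finally show ?thesis unfolding ip_def .
  qed
  also have "\<dots> = 0" using assms by simp
  finally have z: "(\<Sum>i<d. (x i - y i)^2) = 0" .
  have "\<forall>j\<in>{..<d}. (x j - y j)^2 = 0"
    using sum_nonneg_eq_0_iff[of "{..<d}" "\<lambda>j. (x j - y j)^2"] z by simp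
  then show "x i = y i" using assms(4,5) by (cases "i < d") auto
qed

theorem theorem4p7:
  fixes H G :: "'a::finite \<Rightarrow> 'a \<Rightarrow> bool"
    and d :: nat and p :: "'a \<Rightarrow> nat \<Rightarrow> real"
  assumes "is_graph H"
    and "uniquely_vector_colorable H"
    and "optimal_vec_coloring H d p"
    and "inj p"
    and "is_graph G"
    and "connected_graph G"
    and "\<forall>u v. H u v \<longrightarrow> G u v"
    and "\<forall>u v. G u v \<longrightarrow> H_prime H d p u v"
  shows "is_core G"
  unfolding is_core_def
proof (intro allI impI)
  fix f assume hom: "graph_hom G G f"
  have vc: "vec_coloring H (vec_chrom H) d p" using assms(3) by (simp add: optimal_vec_coloring_def)
  have "vec_coloring H (vec_chrom H) d (p \<circ> f)"
    unfolding vec_coloring_def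
  proof (intro conjI allI impI)
    show "2 \<le> vec_chrom H" using vc unfolding vec_coloring_def by blast
    show "\<And>v i. d \<le> i \<Longrightarrow> (p \<circ> f) v i = 0" using vc unfolding vec_coloring_def by simp
    show "\<And>v. ip d ((p \<circ> f) v) ((p \<circ> f) v) = 1" using vc unfolding vec_coloring_def by simp
    fix u v assume "H u v"
    then have "G (f u) (f v)" using hom assms(7) unfolding graph_hom_def by blast
    then show "ip d ((p \<circ> f) u) ((p \<circ> f) v) \<le> - 1 / (vec_chrom H - 1)"
      using assms(8) unfolding H_prime_def by simp
  qed
  then have "optimal_vec_coloring H d (p \<circ> f)" by (simp add: optimal_vec_coloring_def)
  then have gram: "\<And>u v. ip d (p u) (p v) = ip d (p (f u)) (p (f v))"
    using assms(2,3) unfolding uniquely_vector_colorable_def by (metis comp_apply)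
  have injf: "inj f"
  proof (rule injI)
    fix u v assume "f u = f v"
    then have "ip d (p u) (p v) = 1" using gram[of u v] vc unfolding vec_coloring_def by simp
    then have "p u = p v" using unit_eq[of d "p u" "p v"] vc unfolding vec_coloring_def by auto
    then show "u = v" using assms(4) by (simp add: inj_eq)
  qed
  then have bf: "bij f" by (simp add: bij_def finite_UNIV_inj_surj)
  define S where "S = {(u,v). G u v}"
  define g where "g = (\<lambda>(u,v). (f u, f v))"
  have ig: "inj_on g S" using injf unfolding g_def inj_on_def inj_def by auto
  have sub: "g ` S \<subseteq> S" using hom unfolding g_def S_def graph_hom_def by auto
  have fin: "finite S" by simp
  have eq: "g ` S = S" using card_subset_eq[OF fin sub] card_image[OF ig] by simp
  have "G u v \<longleftrightarrow> G (f u) (f v)" for u v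
  proof
    assume "G u v" then show "G (f u) (f v)" using hom by (simp add: graph_hom_def)
  next
    assume "G (f u) (f v)"
    then have "(f u, f v) \<in> g ` S" using eq by (simp add: S_def)
    then obtain a b where "G a b" "f a = f u" "f b = f v" unfolding g_def S_def by auto
    then show "G u v" using injf by (simp add: inj_eq)
  qed
  then show "graph_aut G f" using bf by (simp add: graph_aut_def)
qed

end
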